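(* In the setting below, the directed graph $\tilde H$ contains no red cycle and no blue cycle.
   Context: Setting: $G$ is a graph; $S_1,T_1,S_2,T_2\subseteq V(G)$ are pairwise disjoint sets of $k$ vertices each, all of degree $1$ in $G$, with $(S_1,T_1)$ and $(S_2,T_2)$ each routable in $G$ (i.e. connected by $k$ node-disjoint paths). $H$ is an $(S_1,T_1,S_2,T_2)$-minimal minor of $G$: a minor of $G$ containing the vertices of $S_1\cup T_1\cup S_2\cup T_2$ as vertices (each such $x$ corresponds to a branch set $\{x\}$), in which both pairs are routable, and such that for every edge $e$ of $H$, deleting $e$ or contracting $e$ destroys one of these properties. $\mathcal{R}$ is a set of $k$ node-disjoint paths routing $(S_1,T_1)$ in $H$ ("red paths") and $\mathcal{B}$ a set of $k$ node-disjoint paths routing $(S_2,T_2)$ in $H$ ("blue paths"). $\tilde H$ is the directed graph on $V(H)$ containing each edge of a red path, directed along the path from $S_1$ to $T_1$ (a red edge), and each edge of a blue path, directed along the path from $S_2$ to $T_2$ (a blue edge). A blue cycle is a simple directed cycle $C$ in $\tilde H$ that can be partitioned into consecutive edge-disjoint segments $\sigma_1,\dots,\sigma_{2r}$, $r>0$, where each $\sigma_{2i}$ consists of a single red edge and each $\sigma_{2i-1}$ is a nonempty path consisting only of blue edges. A red cycle is defined the same way with the roles of red and blue exchanged. *)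

theory Defs
  imports Main
begin

definition graph :: "'v set \<Rightarrow> 'v set set \<Rightarrow> bool" where
  "graph V E \<longleftrightarrow> finite V \<and> (\<forall>e\<in>E. card e = 2 \<and> e \<subseteq> V)"

definition degree :: "'v set set \<Rightarrow> 'v \<Rightarrow> nat" where
  "degree E x = card {e\<in>E. x \<in> e}"

definition is_path :: "'v set \<Rightarrow> 'v set set \<Rightarrow> 'v list \<Rightarrow> bool" where
  "is_path V E p \<longleftrightarrow> p \<noteq> [] \<and> distinct p \<and> set p \<subseteq> V \<and>
     (\<forall>i. Suc i < length p \<longrightarrow> {p!i, p!Suc i} \<in> E)"

definition routing :: "'v set \<Rightarrow> 'v set set \<Rightarrow> 'v set \<Rightarrow> 'v set \<Rightarrow> nat \<Rightarrow> 'v list set \<Rightarrow> bool" where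
  "routing V E S T k P \<longleftrightarrow> finite P \<and> card P = k \<and>
     (\<forall>p\<in>P. is_path V E p \<and> hd p \<in> S \<and> last p \<in> T) \<and>
     (\<forall>p\<in>P. \<forall>q\<in>P. p \<noteq> q \<longrightarrow> set p \<inter> set q = {})"

definition routable :: "'v set \<Rightarrow> 'v set set \<Rightarrow> 'v set \<Rightarrow> 'v set \<Rightarrow> nat \<Rightarrow> bool" where
  "routable V E S T k \<longleftrightarrow> (\<exists>P. routing V E S T k P)"

definition connected_set :: "'v set set \<Rightarrow> 'v set \<Rightarrow> bool" where
  "connected_set E X \<longleftrightarrow>
     (\<forall>u\<in>X. \<forall>v\<in>X. (u, v) \<in> {(a, b). {a, b} \<in> E \<and> a \<in> X \<and> b \<in> X}\<^sup>*)"

text \<open>(VH, EH) is a minor of (V, E) whose vertices are its branch sets: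
  nonempty, pairwise disjoint, connected vertex sets of G; every edge of H joins two
  distinct branch sets between which G has an edge.\<close>
definition minor_model :: "'v set \<Rightarrow> 'v set set \<Rightarrow> 'v set set \<Rightarrow> 'v set set set \<Rightarrow> bool" where
  "minor_model V E VH EH \<longleftrightarrow>
     (\<forall>X\<in>VH. X \<noteq> {} \<and> X \<subseteq> V \<and> connected_set E X) \<and>
     (\<forall>X\<in>VH. \<forall>Y\<in>VH. X \<noteq> Y \<longrightarrow> X \<inter> Y = {}) \<and>
     (\<forall>e\<in>EH. \<exists>X Y. e = {X, Y} \<and> X \<in> VH \<and> Y \<in> VH \<and> X \<noteq> Y \<and>
                    (\<exists>x\<in>X. \<exists>y\<in>Y. {x, y} \<in> E))"

definition good_minor ::
  "'v set \<Rightarrow> 'v set set \<Rightarrow> 'v set \<Rightarrow> 'v set \<Rightarrow> 'v set \<Rightarrow> 'v set \<Rightarrow> nat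
   \<Rightarrow> 'v set set \<Rightarrow> 'v set set set \<Rightarrow> bool" where
  "good_minor V E S1 T1 S2 T2 k VH EH \<longleftrightarrow>
     minor_model V E VH EH \<and>
     (\<forall>x \<in> S1 \<union> T1 \<union> S2 \<union> T2. {x} \<in> VH) \<and>
     routable VH EH ((\<lambda>x. {x}) ` S1) ((\<lambda>x. {x}) ` T1) k \<and>
     routable VH EH ((\<lambda>x. {x}) ` S2) ((\<lambda>x. {x}) ` T2) k"

definition delete_edge :: "'w set \<Rightarrow> 'w \<Rightarrow> 'w set" where
  "delete_edge EH e = EH - {e}"

definition contract_map :: "'v set \<Rightarrow> 'v set \<Rightarrow> 'v set \<Rightarrow> 'v set" where
  "contract_map X Y Z = (if Z = X \<or> Z = Y then X \<union> Y else Z)"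

definition contract_vertices :: "'v set set \<Rightarrow> 'v set \<Rightarrow> 'v set \<Rightarrow> 'v set set" where
  "contract_vertices VH X Y = contract_map X Y ` VH"

definition contract_edges :: "'v set set set \<Rightarrow> 'v set \<Rightarrow> 'v set \<Rightarrow> 'v set set set" where
  "contract_edges EH X Y =
     {contract_map X Y ` e | e. e \<in> EH \<and> card (contract_map X Y ` e) = 2}"

definition minimal_minor ::
  "'v set \<Rightarrow> 'v set set \<Rightarrow> 'v set \<Rightarrow> 'v set \<Rightarrow> 'v set \<Rightarrow> 'v set \<Rightarrow> nat
   \<Rightarrow> 'v set set \<Rightarrow> 'v set set set \<Rightarrow> bool" where
  "minimal_minor V E S1 T1 S2 T2 k VH EH \<longleftrightarrow>
     good_minor V E S1 T1 S2 T2 k VH EH \<and>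
     (\<forall>X Y. {X, Y} \<in> EH \<longrightarrow>
        \<not> good_minor V E S1 T1 S2 T2 k VH (delete_edge EH {X, Y}) \<and>
        \<not> good_minor V E S1 T1 S2 T2 k (contract_vertices VH X Y) (contract_edges EH X Y))"

datatype colour = Red | Blue

text \<open>Arcs of H~: (tail, head, colour); each edge of a red (blue) path directed along the path.\<close>
definition path_arcs :: "colour \<Rightarrow> 'w list set \<Rightarrow> ('w \<times> 'w \<times> colour) set" where
  "path_arcs c P = {(p!i, p!Suc i, c) | p i. p \<in> P \<and> Suc i < length p}"

definition tilde_arcs :: "'w list set \<Rightarrow> 'w list set \<Rightarrow> ('w \<times> 'w \<times> colour) set" where
  "tilde_arcs R B = path_arcs Red R \<union> path_arcs Blue B"

definition arc_tail :: "'w \<times> 'w \<times> colour \<Rightarrow> 'w" where "arc_tail a = fst a"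
definition arc_head :: "'w \<times> 'w \<times> colour \<Rightarrow> 'w" where "arc_head a = fst (snd a)"
definition arc_col :: "'w \<times> 'w \<times> colour \<Rightarrow> colour" where "arc_col a = snd (snd a)"

definition simple_dcycle :: "('w \<times> 'w \<times> colour) set \<Rightarrow> ('w \<times> 'w \<times> colour) list \<Rightarrow> bool" where
  "simple_dcycle A cs \<longleftrightarrow> cs \<noteq> [] \<and> set cs \<subseteq> A \<and> distinct (map arc_tail cs) \<and>
     (\<forall>i<length cs. arc_head (cs!i) = arc_tail (cs ! ((Suc i) mod length cs)))"

text \<open>A cycle partitioned into consecutive segments sigma_1,...,sigma_2r (r > 0), where the
  even-numbered segments are single arcs of colour c1 and the odd-numbered ones are nonempty
  paths of arcs of colour c2. Blue cycle: c1 = Red, c2 = Blue; red cycle: vice versa.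
  (List index j corresponds to segment sigma_(j+1).)\<close>
definition alt_cycle :: "colour \<Rightarrow> colour \<Rightarrow> ('w \<times> 'w \<times> colour) set \<Rightarrow> ('w \<times> 'w \<times> colour) list \<Rightarrow> bool" where
  "alt_cycle c1 c2 A C \<longleftrightarrow> simple_dcycle A C \<and>
     (\<exists>segs r. r > 0 \<and> length segs = 2 * r \<and> C = concat segs \<and>
        (\<forall>j<2 * r. if even j then segs!j \<noteq> [] \<and> (\<forall>a\<in>set (segs!j). arc_col a = c2)
                   else (\<exists>a. segs!j = [a] \<and> arc_col a = c1)))"

definition blue_cycle :: "('w \<times> 'w \<times> colour) set \<Rightarrow> ('w \<times> 'w \<times> colour) list \<Rightarrow> bool" where
  "blue_cycle A C \<longleftrightarrow> alt_cycle Red Blue A C"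

definition red_cycle :: "('w \<times> 'w \<times> colour) set \<Rightarrow> ('w \<times> 'w \<times> colour) list \<Rightarrow> bool" where
  "red_cycle A C \<longleftrightarrow> alt_cycle Blue Red A C"

end

theory Submission
  imports Defs
begin

lemma is_path_succ:
  "is_path V E p \<longleftrightarrow> p \<noteq> [] \<and> distinct p \<and> set p \<subseteq> V \<and> successively (\<lambda>a b. {a,b} \<in> E) p"
  unfolding is_path_def successively_conv_nth by blast

definition nx :: "('w \<times> 'w) set \<Rightarrow> 'w \<Rightarrow> 'w" where
  "nx A x = (THE y. (x,y) \<in> A)"

definition hasout :: "('w \<times> 'w) set \<Rightarrow> 'w \<Rightarrow> bool" where
  "hasout A x \<longleftrightarrow> (\<exists>y. (x,y) \<in> A)"

lemma nx_in:
  assumes fn: "\<And>x y z. (x,y)\<in>A \<Longrightarrow> (x,z)\<in>A \<Longrightarrow> y=z" and "hasout A x"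
  shows "(x, nx A x) \<in> A"
proof -
  obtain y where y: "(x,y) \<in> A" using assms(2) hasout_def by metis
  have "nx A x = y" unfolding nx_def using y fn by blast
  then show ?thesis using y by simp
qed

lemma back_steps:
  assumes fn: "\<And>x y z. (x,y)\<in>A \<Longrightarrow> (x,z)\<in>A \<Longrightarrow> y=z"
    and inj: "\<And>x y z. (x,z)\<in>A \<Longrightarrow> (y,z)\<in>A \<Longrightarrow> x=y"
  shows "(\<forall>i<m. hasout A ((nx A ^^ i) x)) \<Longrightarrow> (\<forall>i<m. hasout A ((nx A ^^ i) y))
     \<Longrightarrow> (nx A ^^ m) x = (nx A ^^ m) y \<Longrightarrow> x = y"
proof (induction m arbitrary: x y)
  case 0 then show ?case by simp
next
  case (Suc m)
  have "(nx A ^^ m) x = (nx A ^^ m) y"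
  proof -
    have a: "((nx A ^^ m) x, nx A ((nx A ^^ m) x)) \<in> A" using Suc.prems(1) by (intro nx_in[OF fn]) auto
    have b: "((nx A ^^ m) y, nx A ((nx A ^^ m) y)) \<in> A" using Suc.prems(2) by (intro nx_in[OF fn]) auto
    from Suc.prems(3) have "nx A ((nx A ^^ m) x) = nx A ((nx A ^^ m) y)" by simp
    then show ?thesis using a b inj by metis
  qed
  then show ?case using Suc by auto
qed

lemma paths_from_arcs:
  fixes A :: "('w \<times> 'w) set"
  assumes finA: "finite A"
    and fn: "\<And>x y z. (x,y)\<in>A \<Longrightarrow> (x,z)\<in>A \<Longrightarrow> y=z"
    and inj: "\<And>x y z. (x,z)\<in>A \<Longrightarrow> (y,z)\<in>A \<Longrightarrow> x=y"
    and edges: "\<And>x y. (x,y)\<in>A \<Longrightarrow> {x,y} \<in> E \<and> x\<in>V \<and> y\<in>V"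
    and finZ: "finite Z" and ZS: "Z \<subseteq> S"
    and Zsrc: "\<And>z. z\<in>Z \<Longrightarrow> (\<nexists>w. (w,z)\<in>A) \<and> hasout A z"
    and sink: "\<And>x w. (w,x)\<in>A \<Longrightarrow> \<not> hasout A x \<Longrightarrow> x \<in> T"
  shows "routable V E S T (card Z)"
proof -
  let ?f = "nx A"
  have noret: "False" if z: "z \<in> Z" and lt: "i < j" and eq: "(?f ^^ i) z = (?f ^^ j) z"
     and ho: "\<forall>l<j. hasout A ((?f ^^ l) z)" for z i j
  proof -
    define y where "y = (?f ^^ (j - i)) z"
    have fy: "(?f ^^ l) y = (?f ^^ (l + (j - i))) z" for l
      unfolding y_def by (simp add: funpow_add)
    have "(?f ^^ i) y = (?f ^^ j) z" using fy[of i] lt by simp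
    moreover have "\<forall>l<i. hasout A ((?f ^^ l) y)"
    proof (intro allI impI)
      fix l assume "l < i" then have "l + (j - i) < j" using lt by simp
      then show "hasout A ((?f ^^ l) y)" using fy[of l] ho by simp
    qed
    ultimately have "z = y" using back_steps[OF fn inj, where m=i and x=z and y=y] ho lt eq by auto
    moreover obtain d where d: "j - i = Suc d" using lt by (metis Suc_diff_Suc)
    have "((?f ^^ d) z, ?f ((?f ^^ d) z)) \<in> A"
    proof (rule nx_in[OF fn])
      show "hasout A ((?f ^^ d) z)" using ho d lt by simp
    qed
    hence "((?f ^^ d) z, y) \<in> A" unfolding y_def d by simp
    ultimately show False using Zsrc[OF z] by auto
  qed
  have ex: "\<exists>n. \<not> hasout A ((?f ^^ n) z)" if z: "z \<in> Z" for z
  proof (rule ccontr)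
    assume "\<not> ?thesis"
    hence all: "\<forall>n. hasout A ((?f ^^ n) z)" by simp
    have "\<forall>n. (?f ^^ n) z \<in> insert z (snd ` A)"
    proof
      fix n show "(?f ^^ n) z \<in> insert z (snd ` A)"
      proof (cases n)
        case (Suc m)
        have "((?f ^^ m) z, ?f ((?f ^^ m) z)) \<in> A" by (rule nx_in[OF fn all[rule_format]])
        then have "?f ((?f ^^ m) z) \<in> snd ` A" by force
        then show ?thesis using Suc by simp
      qed simp
    qed
    hence "range (\<lambda>n. (?f ^^ n) z) \<subseteq> insert z (snd ` A)" by blast
    hence "finite (range (\<lambda>n. (?f ^^ n) z))" using finA by (meson finite_imageI finite_insert finite_subset)
    hence "\<not> inj (\<lambda>n. (?f ^^ n) z)" using finite_imageD infinite_UNIV_nat by blast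
    then obtain i j where "i \<noteq> j" "(?f ^^ i) z = (?f ^^ j) z"
      unfolding inj_def by blast
    then show False
    proof (cases "i < j")
      case True then show False using noret[OF z True] all \<open>(?f ^^ i) z = (?f ^^ j) z\<close> by blast
    next
      case False then have "j < i" using \<open>i \<noteq> j\<close> by simp
      then show False using noret[OF z, of j i] all \<open>(?f ^^ i) z = (?f ^^ j) z\<close> by simp
    qed
  qed
  define len where "len z = (LEAST n. \<not> hasout A ((?f ^^ n) z))" for z
  have len1: "\<not> hasout A ((?f ^^ len z) z)" if "z \<in> Z" for z
    unfolding len_def using ex[OF that] by (metis LeastI)
  have len2: "hasout A ((?f ^^ l) z)" if "z \<in> Z" "l < len z" for z l
    unfolding len_def using that(2) not_less_Least unfolding len_def by blast
  have lenpos: "len z > 0" if "z \<in> Z" for z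
    using len1[OF that] Zsrc[OF that] by (metis funpow_0 gr0I)
  define pth where "pth z = map (\<lambda>i. (?f ^^ i) z) [0..<Suc (len z)]" for z
  have pth_nth: "pth z ! i = (?f ^^ i) z" if "i \<le> len z" for z i
    unfolding pth_def using that by (simp add: nth_map_upt less_Suc_eq_le del: upt_Suc)
  have pth_len: "length (pth z) = Suc (len z)" for z unfolding pth_def by simp
  have isp: "is_path V E (pth z) \<and> hd (pth z) \<in> S \<and> last (pth z) \<in> T" if z: "z \<in> Z" for z
  proof -
    have ne: "pth z \<noteq> []" unfolding pth_def by simp
    have dist: "distinct (pth z)"
    proof (rule distinct_conv_nth[THEN iffD2], intro allI impI)
      fix i j assume "i < length (pth z)" "j < length (pth z)" "i \<noteq> j"
      then have ij: "i \<le> len z" "j \<le> len z" "i \<noteq> j" using pth_len by auto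
      show "pth z ! i \<noteq> pth z ! j"
      proof
        assume "pth z ! i = pth z ! j"
        hence e: "(?f ^^ i) z = (?f ^^ j) z" using pth_nth ij by simp
        show False
        proof (cases "i < j")
          case True then show False using noret[OF z True e] len2[OF z] ij by force
        next
          case False then have "j < i" using ij by simp
          then show False using noret[OF z, of j i] e len2[OF z] ij by force
        qed
      qed
    qed
    have arcs: "((?f ^^ i) z, (?f ^^ Suc i) z) \<in> A" if "i < len z" for i
      using nx_in[OF fn len2[OF z that]] by simp
    have succ: "successively (\<lambda>a b. {a,b} \<in> E) (pth z)"
      unfolding successively_conv_nth
    proof (intro allI impI)
      fix i assume "Suc i < length (pth z)"
      hence i: "i < len z" using pth_len by simp
      show "{pth z ! i, pth z ! Suc i} \<in> E" using pth_nth i arcs[OF i] edges by simp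
    qed
    have sV: "set (pth z) \<subseteq> V"
    proof
      fix v assume "v \<in> set (pth z)"
      then obtain i where i: "i < length (pth z)" "v = pth z ! i" by (metis in_set_conv_nth)
      show "v \<in> V"
      proof (cases i)
        case 0 then show ?thesis using i pth_nth arcs[of 0] lenpos[OF z] edges by fastforce
      next
        case (Suc m) then show ?thesis using i pth_nth[of i z] arcs[of m] pth_len edges by fastforce
      qed
    qed
    have "hd (pth z) = z" unfolding pth_def by (simp del: upt_Suc add: hd_map upt_conv_Cons)
    moreover have "last (pth z) \<in> T"
    proof -
      have "last (pth z) = (?f ^^ len z) z" using pth_nth pth_len ne by (simp add: last_conv_nth)
      moreover obtain m where m: "len z = Suc m" using lenpos[OF z] gr0_implies_Suc by blast
      ultimately show ?thesis using sink[OF arcs[of m]] len1[OF z] m by auto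
    qed
    ultimately show ?thesis using ne dist succ sV ZS z by (auto simp: is_path_succ)
  qed
  have hdp: "hd (pth z) = z" for z unfolding pth_def by (simp del: upt_Suc add: hd_map upt_conv_Cons)
  have disj: "set (pth z) \<inter> set (pth z') = {}" if "z \<in> Z" "z' \<in> Z" "z \<noteq> z'" for z z'
  proof (rule ccontr)
    assume "set (pth z) \<inter> set (pth z') \<noteq> {}"
    then obtain i j where ij: "i \<le> len z" "j \<le> len z'" "(?f ^^ i) z = (?f ^^ j) z'"
      by (metis disjoint_iff in_set_conv_nth pth_len pth_nth less_Suc_eq_le)
    have gen: False if a: "a \<in> Z" "b \<in> Z" "a \<noteq> b" "i \<le> len a" "j \<le> len b" "i \<le> j"
       "(?f ^^ i) a = (?f ^^ j) b" for a b i j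
    proof -
      define y where "y = (?f ^^ (j - i)) b"
      have fy: "(?f ^^ l) y = (?f ^^ (l + (j - i))) b" for l
        unfolding y_def by (simp add: funpow_add)
      have "(?f ^^ i) y = (?f ^^ j) b" using fy[of i] a(6) by simp
      moreover have "\<forall>l<i. hasout A ((?f ^^ l) y)"
      proof (intro allI impI)
        fix l assume "l < i" then have "l + (j - i) < len b" using a by simp
        then show "hasout A ((?f ^^ l) y)" using fy[of l] len2[OF a(2)] by simp
      qed
      ultimately have ay: "a = y" using back_steps[OF fn inj, where m=i and x=a and y=y] len2[OF a(1)] a by auto
      show False
      proof (cases "i = j")
        case True then show False using ay y_def a by simp
      next
        case False
        then obtain d where d: "j - i = Suc d" using a(6) by (metis Suc_diff_Suc le_neq_implies_less)
        have "((?f ^^ d) b, ?f ((?f ^^ d) b)) \<in> A"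
        proof (rule nx_in[OF fn len2[OF a(2)]])
          show "d < len b" using d a by simp
        qed
        hence "((?f ^^ d) b, a) \<in> A" using ay unfolding y_def d by simp
        then show False using Zsrc[OF a(1)] by auto
      qed
    qed
    show False
    proof (cases "i \<le> j")
      case True then show False using gen[of z z' i j] that ij by auto
    next
      case False then show False using gen[of z' z j i] that ij by auto
    qed
  qed
  have injp: "inj_on pth Z" by (metis hdp inj_onI)
  have "routing V E S T (card Z) (pth ` Z)"
    unfolding routing_def using isp disj injp finZ card_image[OF injp] by auto
  then show ?thesis unfolding routable_def by blast
qed


definition parcs :: "'w list set \<Rightarrow> ('w \<times> 'w) set" where
  "parcs P = {(p!i, p!Suc i) | p i. p \<in> P \<and> Suc i < length p}"

lemma path_arcs_iff:
  "a \<in> path_arcs c P \<longleftrightarrow> (arc_tail a, arc_head a) \<in> parcs P \<and> arc_col a = c"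
  unfolding path_arcs_def parcs_def arc_tail_def arc_head_def arc_col_def
  by (cases a) auto

lemma same_path:
  assumes "routing V E S T k P" "p \<in> P" "q \<in> P" "v \<in> set p" "v \<in> set q"
  shows "p = q"
  using assms unfolding routing_def by blast

lemma routing_path:
  assumes "routing V E S T k P" "p \<in> P"
  shows "is_path V E p" "hd p \<in> S" "last p \<in> T"
  using assms unfolding routing_def by auto

lemma parcsE:
  assumes "(x,y) \<in> parcs P"
  obtains p i where "p \<in> P" "Suc i < length p" "p!i = x" "p!Suc i = y"
  using assms unfolding parcs_def by blast

lemma parcsI:
  assumes "p \<in> P" "Suc i < length p"
  shows "(p!i, p!Suc i) \<in> parcs P"
  using assms unfolding parcs_def by blast

lemma parcs_fun:
  assumes R: "routing V E S T k P" and "(x,y) \<in> parcs P" "(x,z) \<in> parcs P"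
  shows "y = z"
proof -
  obtain p i where p: "p \<in> P" "Suc i < length p" "p!i = x" "p!Suc i = y" using assms(2) by (rule parcsE)
  obtain q j where q: "q \<in> P" "Suc j < length q" "q!j = x" "q!Suc j = z" using assms(3) by (rule parcsE)
  have "p = q" using same_path[OF R p(1) q(1), of x] p q by (metis Suc_lessD nth_mem)
  moreover have "distinct p" using routing_path(1)[OF R p(1)] unfolding is_path_def by simp
  ultimately have "i = j" using p q by (metis Suc_lessD nth_eq_iff_index_eq)
  then show ?thesis using p q \<open>p = q\<close> by simp
qed

lemma parcs_inj:
  assumes R: "routing V E S T k P" and "(x,z) \<in> parcs P" "(y,z) \<in> parcs P"
  shows "x = y"
proof -
  obtain p i where p: "p \<in> P" "Suc i < length p" "p!i = x" "p!Suc i = z" using assms(2) by (rule parcsE)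
  obtain q j where q: "q \<in> P" "Suc j < length q" "q!j = y" "q!Suc j = z" using assms(3) by (rule parcsE)
  have "p = q" using same_path[OF R p(1) q(1), of z] p q by (metis nth_mem)
  moreover have "distinct p" using routing_path(1)[OF R p(1)] unfolding is_path_def by simp
  ultimately have "Suc i = Suc j" using p q by (metis nth_eq_iff_index_eq)
  then show ?thesis using p q \<open>p = q\<close> by simp
qed

lemma parcs_2cyc:
  assumes R: "routing V E S T k P" and "(x,y) \<in> parcs P" "(y,x) \<in> parcs P"
  shows False
proof -
  obtain p i where p: "p \<in> P" "Suc i < length p" "p!i = x" "p!Suc i = y" using assms(2) by (rule parcsE)
  obtain q j where q: "q \<in> P" "Suc j < length q" "q!j = y" "q!Suc j = x" using assms(3) by (rule parcsE)
  have "p = q" using same_path[OF R p(1) q(1), of x] p q by (metis Suc_lessD nth_mem)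
  moreover have "distinct p" using routing_path(1)[OF R p(1)] unfolding is_path_def by simp
  ultimately have "Suc i = j" "i = Suc j" using p q by (metis Suc_lessD nth_eq_iff_index_eq)+
  then show False by simp
qed

lemma parcs_edge:
  assumes R: "routing V E S T k P" and "(x,y) \<in> parcs P"
  shows "{x,y} \<in> E \<and> x \<in> V \<and> y \<in> V"
proof -
  obtain p i where p: "p \<in> P" "Suc i < length p" "p!i = x" "p!Suc i = y" using assms(2) by (rule parcsE)
  have ip: "is_path V E p" using routing_path[OF R p(1)] by simp
  then show ?thesis using p unfolding is_path_def by (metis Suc_lessD nth_mem subsetD)
qed

lemma parcs_finite:
  assumes R: "routing V E S T k P"
  shows "finite (parcs P)"
proof -
  have "parcs P \<subseteq> (\<Union>p\<in>P. set p) \<times> (\<Union>p\<in>P. set p)"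
    unfolding parcs_def by (auto intro!: nth_mem)
  moreover have "finite P" using R unfolding routing_def by simp
  ultimately show ?thesis by (meson finite_SigmaI finite_UN_I finite_set finite_subset)
qed

lemma no_in_S:
  assumes R: "routing V E S T k P" and "p \<in> P" "v \<in> set p" "\<nexists>w. (w,v) \<in> parcs P"
  shows "v \<in> S"
proof -
  obtain j where j: "j < length p" "p!j = v" using assms(3) by (metis in_set_conv_nth)
  have "j = 0"
  proof (rule ccontr)
    assume "j \<noteq> 0"
    then obtain i where "j = Suc i" by (metis not0_implies_Suc)
    then show False using parcsI[OF assms(2), of i] j assms(4) by auto
  qed
  then have "v = hd p" using j by (simp add: hd_conv_nth)
  then show ?thesis using routing_path[OF R assms(2)] by simp
qed

lemma no_out_T:
  assumes R: "routing V E S T k P" and "p \<in> P" "v \<in> set p" "\<nexists>w. (v,w) \<in> parcs P"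
  shows "v \<in> T"
proof -
  obtain j where j: "j < length p" "p!j = v" using assms(3) by (metis in_set_conv_nth)
  have "Suc j = length p"
  proof (rule ccontr)
    assume "Suc j \<noteq> length p"
    then have "Suc j < length p" using j by simp
    then show False using parcsI[OF assms(2), of j] j assms(4) by auto
  qed
  then have "v = last p" using j by (metis diff_Suc_1 last_conv_nth list.size(3) nat.distinct(1))
  then show ?thesis using routing_path[OF R assms(2)] by simp
qed

lemma parcs_on_path:
  assumes "(x,y) \<in> parcs P"
  shows "\<exists>p\<in>P. x \<in> set p \<and> y \<in> set p"
  using assms by (metis Suc_lessD nth_mem parcsE)

lemma hd_no_in:
  assumes R: "routing V E S T k P" and "p \<in> P"
  shows "\<nexists>w. (w, hd p) \<in> parcs P"
proof
  assume "\<exists>w. (w, hd p) \<in> parcs P"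
  then obtain w q i where q: "q \<in> P" "Suc i < length q" "q!i = w" "q!Suc i = hd p"
    by (metis parcsE)
  have ne: "p \<noteq> []" using routing_path(1)[OF R assms(2)] unfolding is_path_def by simp
  have "q = p" using same_path[OF R q(1) assms(2), of "hd p"] q ne by (metis hd_in_set nth_mem)
  moreover have "distinct p" using routing_path(1)[OF R assms(2)] unfolding is_path_def by simp
  ultimately have "Suc i = 0" using q ne by (metis hd_conv_nth length_greater_0_conv nth_eq_iff_index_eq)
  then show False by simp
qed

lemma hd_out:
  assumes R: "routing V E S T k P" and "p \<in> P" and ST: "S \<inter> T = {}"
  shows "(hd p, p!1) \<in> parcs P"
proof -
  have ne: "p \<noteq> []" using routing_path(1)[OF R assms(2)] unfolding is_path_def by simp
  have "length p \<noteq> 1"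
  proof
    assume "length p = 1"
    then have "hd p = last p" by (metis One_nat_def hd_conv_nth last_conv_nth diff_self_eq_0 ne)
    then show False using routing_path[OF R assms(2)] ST by auto
  qed
  then have "Suc 0 < length p" using ne by (metis One_nat_def length_greater_0_conv less_one linorder_neqE_nat not_less0)
  then show ?thesis using parcsI[OF assms(2), of 0] ne by (simp add: hd_conv_nth)
qed

lemma hd_inj:
  assumes R: "routing V E S T k P"
  shows "inj_on hd P" "card (hd ` P) = k"
proof -
  show "inj_on hd P"
  proof (rule inj_onI)
    fix p q assume "p \<in> P" "q \<in> P" "hd p = hd q"
    moreover have "p \<noteq> []" using routing_path(1)[OF R \<open>p\<in>P\<close>] unfolding is_path_def by simp
    ultimately show "p = q" using same_path[OF R, of p q "hd p"] by (metis hd_in_set routing_path(1)[OF R] is_path_def)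
  qed
  then show "card (hd ` P) = k" using R card_image unfolding routing_def by metis
qed


lemma model_edge:
  assumes M: "minor_model V E VH EH" and e: "{u,v} \<in> EH"
  shows "u \<noteq> v \<and> u \<in> VH \<and> v \<in> VH \<and> (\<exists>x\<in>u. \<exists>y\<in>v. {x,y} \<in> E)"
proof -
  have "\<forall>e\<in>EH. \<exists>X Y. e = {X, Y} \<and> X \<in> VH \<and> Y \<in> VH \<and> X \<noteq> Y \<and>
                    (\<exists>x\<in>X. \<exists>y\<in>Y. {x, y} \<in> E)" using M unfolding minor_model_def by (elim conjE)
  from this[rule_format, OF e]
  obtain X Y where XY: "{u,v} = {X,Y}" "X \<in> VH" "Y \<in> VH" "X \<noteq> Y" "\<exists>x\<in>X. \<exists>y\<in>Y. {x, y} \<in> E"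
    by iprover
  then have "(u = X \<and> v = Y) \<or> (u = Y \<and> v = X)" by (metis doubleton_eq_iff)
  then show ?thesis
  proof
    assume "u = X \<and> v = Y" then show ?thesis using XY(2-5) by simp
  next
    assume uv: "u = Y \<and> v = X"
    from XY(5) obtain x y where "x \<in> X" "y \<in> Y" "{x,y} \<in> E" by blast
    then have "{y,x} \<in> E" by (simp add: insert_commute)
    then show ?thesis using uv XY(2-4) \<open>x \<in> X\<close> \<open>y \<in> Y\<close> by blast
  qed
qed

lemma model_edges:
  assumes M: "minor_model V E VH EH" and e: "e \<in> EH"
  shows "\<exists>X Y. e = {X, Y} \<and> X \<in> VH \<and> Y \<in> VH \<and> X \<noteq> Y \<and> (\<exists>x\<in>X. \<exists>y\<in>Y. {x, y} \<in> E)"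
proof -
  have "\<forall>e\<in>EH. \<exists>X Y. e = {X, Y} \<and> X \<in> VH \<and> Y \<in> VH \<and> X \<noteq> Y \<and>
                    (\<exists>x\<in>X. \<exists>y\<in>Y. {x, y} \<in> E)" using M unfolding minor_model_def by (elim conjE)
  from this e show ?thesis by (rule bspec)
qed

lemma model_disj:
  assumes M: "minor_model V E VH EH" "X \<in> VH" "Y \<in> VH" "X \<noteq> Y"
  shows "X \<inter> Y = {}"
proof -
  have "\<forall>X\<in>VH. \<forall>Y\<in>VH. X \<noteq> Y \<longrightarrow> X \<inter> Y = {}" using M unfolding minor_model_def by (elim conjE)
  then show ?thesis using M by blast
qed

lemma model_bs:
  assumes M: "minor_model V E VH EH" "X \<in> VH"
  shows "X \<noteq> {} \<and> X \<subseteq> V \<and> connected_set E X"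
proof -
  have "\<forall>X\<in>VH. X \<noteq> {} \<and> X \<subseteq> V \<and> connected_set E X" using M unfolding minor_model_def by (elim conjE)
  then show ?thesis using M by blast
qed

lemma union_notin:
  assumes M: "minor_model V E VH EH" "X \<in> VH" "Y \<in> VH" "X \<noteq> Y"
  shows "X \<union> Y \<notin> VH"
proof
  assume Z: "X \<union> Y \<in> VH"
  have ne: "X \<noteq> {}" "Y \<noteq> {}" using model_bs[OF M(1)] M by auto
  show False
  proof (cases "X \<union> Y = X")
    case True
    then have "Y \<subseteq> X" by blast
    then show ?thesis using model_disj[OF M] ne by blast
  next
    case False
    then show ?thesis using model_disj[OF M(1) Z M(2) False] ne by blast
  qed
qed

lemma connected_union:
  assumes cX: "connected_set E X" and cY: "connected_set E Y" and x0: "x0 \<in> X" and y0: "y0 \<in> Y"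
    and e: "{x0,y0} \<in> E"
  shows "connected_set E (X \<union> Y)"
proof -
  define Rl where "Rl Z = {(a, b). {a, b} \<in> E \<and> a \<in> Z \<and> b \<in> Z}" for Z
  have mono: "(Rl X)\<^sup>* \<subseteq> (Rl (X \<union> Y))\<^sup>*" "(Rl Y)\<^sup>* \<subseteq> (Rl (X \<union> Y))\<^sup>*"
    by (auto intro!: rtrancl_mono simp: Rl_def)
  have xy: "(x0, y0) \<in> Rl (X \<union> Y)" "(y0, x0) \<in> Rl (X \<union> Y)"
    using x0 y0 e by (auto simp: Rl_def insert_commute)
  have to: "(u, x0) \<in> (Rl (X \<union> Y))\<^sup>*" if "u \<in> X \<union> Y" for u
  proof (cases "u \<in> X")
    case True then show ?thesis using cX x0 mono unfolding connected_set_def Rl_def by blast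
  next
    case False then have "u \<in> Y" using that by blast
    then have "(u, y0) \<in> (Rl (X \<union> Y))\<^sup>*" using cY y0 mono unfolding connected_set_def Rl_def by blast
    then show ?thesis using xy by (meson rtrancl.rtrancl_into_rtrancl)
  qed
  have frm: "(x0, v) \<in> (Rl (X \<union> Y))\<^sup>*" if "v \<in> X \<union> Y" for v
  proof (cases "v \<in> X")
    case True then show ?thesis using cX x0 mono unfolding connected_set_def Rl_def by blast
  next
    case False then have "v \<in> Y" using that by blast
    then have "(y0, v) \<in> (Rl (X \<union> Y))\<^sup>*" using cY y0 mono unfolding connected_set_def Rl_def by blast
    then show ?thesis using xy by (meson converse_rtrancl_into_rtrancl)
  qed
  show ?thesis unfolding connected_set_def
    using to frm rtrancl_trans unfolding Rl_def by fast
qed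

lemma contract_map_sup: "Z \<subseteq> contract_map X Y Z"
  unfolding contract_map_def by auto

lemma contract_model:
  assumes M: "minor_model V E VH EH" and e: "{X,Y} \<in> EH"
  shows "minor_model V E (contract_vertices VH X Y) (contract_edges EH X Y)"
proof -
  let ?f = "contract_map X Y"
  from model_edge[OF M e] obtain x0 y0 where XY: "X \<noteq> Y" "X \<in> VH" "Y \<in> VH" "x0 \<in> X" "y0 \<in> Y" "{x0,y0} \<in> E"
    by blast
  have bs: "Z \<noteq> {} \<and> Z \<subseteq> V \<and> connected_set E Z" if Z: "Z \<in> ?f ` VH" for Z
  proof -
    obtain W where W: "W \<in> VH" "Z = ?f W" using Z by blast
    show ?thesis
    proof (cases "W = X \<or> W = Y")
      case True
      then have "Z = X \<union> Y" using W unfolding contract_map_def by simp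
      moreover have "connected_set E (X \<union> Y)"
        using connected_union[of E X Y x0 y0] model_bs[OF M XY(2)] model_bs[OF M XY(3)] XY(4-6) by simp
      moreover have "X \<union> Y \<noteq> {}" "X \<union> Y \<subseteq> V" using model_bs[OF M XY(2)] model_bs[OF M XY(3)] by auto
      ultimately show ?thesis by simp
    next
      case False
      then show ?thesis using W model_bs[OF M W(1)] unfolding contract_map_def by simp
    qed
  qed
  have dj: "Z1 \<inter> Z2 = {}" if Z: "Z1 \<in> ?f ` VH" "Z2 \<in> ?f ` VH" "Z1 \<noteq> Z2" for Z1 Z2
  proof -
    obtain W1 where W1: "W1 \<in> VH" "Z1 = ?f W1" using Z by blast
    obtain W2 where W2: "W2 \<in> VH" "Z2 = ?f W2" using Z by blast
    have d1: "W1 \<inter> X = {}" if "W1 \<noteq> X" using model_disj[OF M W1(1) XY(2) that] .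
    have d2: "W1 \<inter> Y = {}" if "W1 \<noteq> Y" using model_disj[OF M W1(1) XY(3) that] .
    have d3: "W2 \<inter> X = {}" if "W2 \<noteq> X" using model_disj[OF M W2(1) XY(2) that] .
    have d4: "W2 \<inter> Y = {}" if "W2 \<noteq> Y" using model_disj[OF M W2(1) XY(3) that] .
    have d5: "W1 \<inter> W2 = {}" if "W1 \<noteq> W2" using model_disj[OF M W1(1) W2(1) that] .
    show ?thesis
    proof (cases "W1 = X \<or> W1 = Y")
      case c1: True
      then have z1: "Z1 = X \<union> Y" using W1 unfolding contract_map_def by simp
      show ?thesis
      proof (cases "W2 = X \<or> W2 = Y")
        case True
        then have "Z2 = X \<union> Y" using W2 unfolding contract_map_def by simp
        then show ?thesis using z1 Z(3) by simp
      next
        case False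
        then have "Z2 = W2" using W2 unfolding contract_map_def by simp
        then show ?thesis using z1 d3 d4 False by blast
      qed
    next
      case c1: False
      then have z1: "Z1 = W1" using W1 unfolding contract_map_def by simp
      show ?thesis
      proof (cases "W2 = X \<or> W2 = Y")
        case True
        then have "Z2 = X \<union> Y" using W2 unfolding contract_map_def by simp
        then show ?thesis using z1 d1 d2 c1 by blast
      next
        case False
        then have "Z2 = W2" using W2 unfolding contract_map_def by simp
        then show ?thesis using z1 d5 Z(3) by blast
      qed
    qed
  qed
  have ed: "\<exists>A B. e' = {A, B} \<and> A \<in> ?f ` VH \<and> B \<in> ?f ` VH \<and> A \<noteq> B \<and> (\<exists>x\<in>A. \<exists>y\<in>B. {x, y} \<in> E)"
    if e': "e' \<in> contract_edges EH X Y" for e'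
  proof -
    obtain e0 where e0: "e' = ?f ` e0" "e0 \<in> EH" "card (?f ` e0) = 2"
      using e' unfolding contract_edges_def by blast
    obtain A B where AB: "e0 = {A,B}" "A \<in> VH" "B \<in> VH" "A \<noteq> B" "\<exists>x\<in>A. \<exists>y\<in>B. {x, y} \<in> E"
      using model_edges[OF M e0(2)] by iprover
    have "e' = {?f A, ?f B}" using e0 AB by simp
    moreover have "?f A \<noteq> ?f B"
    proof
      assume "?f A = ?f B"
      then have "?f ` e0 = {?f A}" using AB(1) by simp
      then show False using e0(3) by simp
    qed
    moreover have "\<exists>x\<in>?f A. \<exists>y\<in>?f B. {x, y} \<in> E"
    proof -
      obtain x y where "x \<in> A" "y \<in> B" "{x,y} \<in> E" using AB(5) by blast
      moreover have "A \<subseteq> ?f A" "B \<subseteq> ?f B" by (rule contract_map_sup)+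
      ultimately show ?thesis by blast
    qed
    moreover have "?f A \<in> ?f ` VH" "?f B \<in> ?f ` VH" using AB by auto
    ultimately show ?thesis by blast
  qed
  show ?thesis unfolding minor_model_def contract_vertices_def
  proof (intro conjI)
    show "\<forall>X\<in>?f ` VH. X \<noteq> {} \<and> X \<subseteq> V \<and> connected_set E X" using bs by blast
    show "\<forall>Xa\<in>?f ` VH. \<forall>Ya\<in>?f ` VH. Xa \<noteq> Ya \<longrightarrow> Xa \<inter> Ya = {}" using dj by blast
    show "\<forall>e\<in>contract_edges EH X Y. \<exists>Xa Ya. e = {Xa, Ya} \<and> Xa \<in> ?f ` VH \<and> Ya \<in> ?f ` VH \<and> Xa \<noteq> Ya \<and>
              (\<exists>x\<in>Xa. \<exists>y\<in>Ya. {x, y} \<in> E)" by (rule ballI, rule ed, assumption)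
  qed
qed

lemma edge_transfer:
  assumes "{u,v} \<in> EH" "contract_map X Y u \<noteq> contract_map X Y v"
  shows "{contract_map X Y u, contract_map X Y v} \<in> contract_edges EH X Y"
proof -
  have "contract_map X Y ` {u,v} = {contract_map X Y u, contract_map X Y v}" by simp
  moreover have "card {contract_map X Y u, contract_map X Y v} = 2" using assms(2) by simp
  ultimately show ?thesis unfolding contract_edges_def using assms(1) by (metis (mono_tags, lifting) mem_Collect_eq)
qed

lemma contract_routing:
  assumes M: "minor_model V E VH EH" and e: "{X,Y} \<in> EH"
    and R: "routing VH EH S T k P" and p0: "p0 \<in> P"
    and dec: "p0 = p1 @ [A,B] @ p2" and AB: "{A,B} = {X,Y}"
    and nS: "X \<notin> S" "Y \<notin> S" and nT: "X \<notin> T" "Y \<notin> T"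
  shows "routing (contract_vertices VH X Y) (contract_edges EH X Y) S T k
           (insert (p1 @ [X \<union> Y] @ p2) (P - {p0}))"
proof -
  let ?f = "contract_map X Y"
  let ?p = "p1 @ [X \<union> Y] @ p2"
  let ?VH = "contract_vertices VH X Y" and ?EH = "contract_edges EH X Y"
  from model_edge[OF M e] have XY: "X \<noteq> Y" "X \<in> VH" "Y \<in> VH" by auto
  have XYn: "X \<union> Y \<notin> VH" using union_notin[OF M XY(2,3,1)] .
  have fid: "?f w = w" if "w \<noteq> X" "w \<noteq> Y" for w using that unfolding contract_map_def by simp
  have fX: "?f X = X \<union> Y" "?f Y = X \<union> Y" unfolding contract_map_def by auto
  have fA: "?f A = X \<union> Y" "?f B = X \<union> Y" using AB fX by (metis doubleton_eq_iff)+
  have inV: "w \<in> ?VH" if "w \<in> VH" "w \<noteq> X" "w \<noteq> Y" for w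
    using that fid unfolding contract_vertices_def by (metis image_eqI)
  have XYV: "X \<union> Y \<in> ?VH" using fX XY unfolding contract_vertices_def by (metis image_eqI)
  have ip0: "is_path VH EH p0" "hd p0 \<in> S" "last p0 \<in> T" using routing_path[OF R p0] by auto
  have Xin: "X \<in> set p0" "Y \<in> set p0" using dec AB by (auto simp: doubleton_eq_iff)
  have other: "X \<notin> set q \<and> Y \<notin> set q" if "q \<in> P" "q \<noteq> p0" for q
    using same_path[OF R that(1) p0] Xin that(2) by blast
  have succ_tr: "successively (\<lambda>a b. {a,b} \<in> ?EH) q"
    if "successively (\<lambda>a b. {a,b} \<in> EH) q" "X \<notin> set q" "Y \<notin> set q" for q
  proof (rule successively_mono[OF that(1)])
    fix a b assume "a \<in> set q" "b \<in> set q" "{a,b} \<in> EH"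
    then show "{a,b} \<in> ?EH" using edge_transfer[of a b EH X Y] fid that model_edge[OF M] by metis
  qed
  have oth_path: "is_path ?VH ?EH q \<and> hd q \<in> S \<and> last q \<in> T" if "q \<in> P" "q \<noteq> p0" for q
  proof -
    have "is_path VH EH q" "hd q \<in> S" "last q \<in> T" using routing_path[OF R that(1)] by auto
    moreover have "set q \<subseteq> ?VH" using inV other[OF that] \<open>is_path VH EH q\<close> unfolding is_path_def by blast
    ultimately show ?thesis using succ_tr other[OF that] by (auto simp: is_path_succ)
  qed
  have d0: "distinct p0" "set p0 \<subseteq> VH" "successively (\<lambda>a b. {a,b} \<in> EH) p0"
    using ip0(1) by (auto simp: is_path_succ)
  have p1n: "X \<notin> set p1" "Y \<notin> set p1" "X \<notin> set p2" "Y \<notin> set p2" "distinct p1" "distinct p2"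
      "set p1 \<inter> set p2 = {}"
    using d0(1) AB unfolding dec by (auto simp: doubleton_eq_iff)
  have p1ne: "p1 \<noteq> []"
  proof
    assume "p1 = []" then have "hd p0 = A" using dec by simp
    then show False using ip0(2) nS AB by (auto simp: doubleton_eq_iff)
  qed
  have p2ne: "p2 \<noteq> []"
  proof
    assume "p2 = []" then have "last p0 = B" using dec by simp
    then show False using ip0(3) nT AB by (auto simp: doubleton_eq_iff)
  qed
  have s0: "successively (\<lambda>a b. {a,b} \<in> EH) p1" "successively (\<lambda>a b. {a,b} \<in> EH) p2"
    "{last p1, A} \<in> EH" "{B, hd p2} \<in> EH"
    using d0(3) p1ne p2ne unfolding dec by (auto simp: successively_append_iff successively_Cons)
  have sp1: "set p1 \<subseteq> VH" "set p2 \<subseteq> VH" using d0(2) unfolding dec by auto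
  have lp1: "last p1 \<in> set p1" "hd p2 \<in> set p2" using p1ne p2ne by auto
  have j1: "{last p1, X \<union> Y} \<in> ?EH"
  proof -
    have "?f (last p1) = last p1" using fid p1n lp1 by metis
    moreover have "last p1 \<noteq> X \<union> Y" using XYn sp1(1) lp1(1) by (metis subsetD)
    ultimately show ?thesis using edge_transfer[OF s0(3)] fA by metis
  qed
  have j2: "{X \<union> Y, hd p2} \<in> ?EH"
  proof -
    have "?f (hd p2) = hd p2" using fid p1n lp1 by metis
    moreover have "hd p2 \<noteq> X \<union> Y" using XYn sp1(2) lp1(2) by (metis subsetD)
    ultimately show ?thesis using edge_transfer[OF s0(4)] fA by metis
  qed
  have newp: "is_path ?VH ?EH ?p \<and> hd ?p \<in> S \<and> last ?p \<in> T"
  proof -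
    have "distinct ?p" using p1n XYn sp1 by auto
    moreover have "set ?p \<subseteq> ?VH" using inV p1n sp1 XYV by auto
    moreover have "successively (\<lambda>a b. {a,b} \<in> ?EH) ?p"
      using succ_tr[OF s0(1)] succ_tr[OF s0(2)] p1n j1 j2 p1ne p2ne
      by (auto simp: successively_append_iff successively_Cons)
    moreover have "hd ?p = hd p0" "last ?p = last p0" using p1ne p2ne dec by auto
    ultimately show ?thesis using ip0 by (auto simp: is_path_succ)
  qed
  have setp: "set ?p \<subseteq> set p0 \<union> {X \<union> Y}" using dec by auto
  have XYq: "X \<union> Y \<notin> set q" if "q \<in> P" for q
    using routing_path(1)[OF R that] XYn unfolding is_path_def by blast
  have finP: "finite P" "card P = k" using R unfolding routing_def by auto
  have pnot: "?p \<notin> P - {p0}" using XYq by force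
  have disjall: "\<forall>q\<in>P. \<forall>r\<in>P. q \<noteq> r \<longrightarrow> set q \<inter> set r = {}" using R unfolding routing_def by blast
  have dnew: "set ?p \<inter> set q = {}" "set q \<inter> set ?p = {}" if "q \<in> P" "q \<noteq> p0" for q
    using setp disjall that p0 XYq[OF that(1)] by blast+
  have "card P > 0" using finP p0 card_gt_0_iff by blast
  have "card (insert ?p (P - {p0})) = k"
    using pnot finP p0 \<open>card P > 0\<close> by (simp add: card.insert_remove)
  then show ?thesis unfolding routing_def
    using newp oth_path dnew disjall finP by auto
qed


lemma term_nbr:
  assumes M: "minor_model V E VH EH" and deg: "degree E x = 1" and xin: "{x} \<in> VH"
    and e1: "{{x},Y1} \<in> EH" and e2: "{{x},Y2} \<in> EH"
  shows "Y1 = Y2"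
proof -
  have nb: "\<exists>y\<in>Y. y \<noteq> x \<and> {x,y} \<in> E \<and> Y \<in> VH" if e: "{{x},Y} \<in> EH" for Y
  proof -
    from model_edge[OF M e] have h: "{x} \<noteq> Y" "Y \<in> VH" "\<exists>a\<in>{x}. \<exists>y\<in>Y. {a, y} \<in> E" by auto
    then obtain y where y: "y \<in> Y" "{x,y} \<in> E" by blast
    have "{x} \<inter> Y = {}" using model_disj[OF M xin h(2) h(1)] .
    then have "y \<noteq> x" using y by blast
    then show ?thesis using y h by blast
  qed
  obtain y1 where y1: "y1 \<in> Y1" "y1 \<noteq> x" "{x,y1} \<in> E" "Y1 \<in> VH" using nb[OF e1] by (elim bexE conjE) (rule that)
  obtain y2 where y2: "y2 \<in> Y2" "y2 \<noteq> x" "{x,y2} \<in> E" "Y2 \<in> VH" using nb[OF e2] by (elim bexE conjE) (rule that)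
  have "card {e\<in>E. x \<in> e} = 1" using deg unfolding degree_def .
  then obtain e0 where e0: "{e\<in>E. x \<in> e} = {e0}" by (rule card_1_singletonE)
  have "{x,y1} \<in> {e\<in>E. x \<in> e}" "{x,y2} \<in> {e\<in>E. x \<in> e}" using y1 y2 by simp_all
  then have "{x,y1} = e0" "{x,y2} = e0" unfolding e0 by simp_all
  then have "{x,y1} = {x,y2}" by simp
  then have "y1 = y2" using y1(2) by (metis doubleton_eq_iff)
  then have "Y1 \<inter> Y2 \<noteq> {}" using y1 y2 by blast
  then show ?thesis using model_disj[OF M y1(4) y2(4)] by blast
qed

lemma term_not_on_path:
  assumes M: "minor_model V E VH EH" and R: "routing VH EH S T k P" and q: "q \<in> P"
    and v: "{x} \<in> set q" and nS: "{x} \<notin> S" and nT: "{x} \<notin> T"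
    and deg: "degree E x = 1" and xin: "{x} \<in> VH"
  shows False
proof -
  have ip: "is_path VH EH q" "hd q \<in> S" "last q \<in> T" using routing_path[OF R q] by auto
  have ne: "q \<noteq> []" and dq: "distinct q" and sq: "successively (\<lambda>a b. {a,b} \<in> EH) q"
    using ip(1) by (auto simp: is_path_succ)
  obtain j where j: "j < length q" "q!j = {x}" using v by (metis in_set_conv_nth)
  have "j \<noteq> 0" using j nS ip(2) ne by (metis hd_conv_nth)
  then obtain i where i: "j = Suc i" by (metis not0_implies_Suc)
  have "Suc j \<noteq> length q" using j nT ip(3) ne by (metis diff_Suc_1 last_conv_nth)
  then have sj: "Suc j < length q" using j by simp
  have "{q!i, q!j} \<in> EH" using successively_nth[OF sq, of i] i j by simp
  then have e1: "{{x}, q!i} \<in> EH" using j by (simp add: insert_commute)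
  have e2: "{{x}, q!Suc j} \<in> EH" using successively_nth[OF sq sj] j by simp
  have "q!i = q!Suc j" using term_nbr[OF M deg xin e1 e2] .
  then have "i = Suc j" using dq sj i nth_eq_iff_index_eq by (metis Suc_lessD)
  then show False using i by simp
qed

lemma split2:
  assumes "Suc i < length p"
  shows "p = take i p @ [p!i, p!Suc i] @ drop (Suc (Suc i)) p"
proof -
  have "drop i p = p!i # drop (Suc i) p" using assms by (simp add: Cons_nth_drop_Suc)
  moreover have "drop (Suc i) p = p!Suc i # drop (Suc (Suc i)) p" using assms by (simp add: Cons_nth_drop_Suc)
  ultimately show ?thesis by (metis append_Cons append_Nil append_take_drop_id)
qed

lemma no_shared:
  assumes H: "minimal_minor V E S1 T1 S2 T2 k VH EH"
    and disj: "S1 \<inter> T1 = {}" "S1 \<inter> S2 = {}" "S1 \<inter> T2 = {}"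
              "T1 \<inter> S2 = {}" "T1 \<inter> T2 = {}" "S2 \<inter> T2 = {}"
    and deg: "\<forall>x \<in> S1 \<union> T1 \<union> S2 \<union> T2. degree E x = 1"
    and Rr: "routing VH EH ((\<lambda>x. {x}) ` S1) ((\<lambda>x. {x}) ` T1) k R"
    and Bb: "routing VH EH ((\<lambda>x. {x}) ` S2) ((\<lambda>x. {x}) ` T2) k B"
    and ab: "(a,b) \<in> parcs R" and cd: "(c,d) \<in> parcs B" and eq: "{a,b} = {c,d}"
  shows False
proof -
  have good: "good_minor V E S1 T1 S2 T2 k VH EH" using H unfolding minimal_minor_def by blast
  have M: "minor_model V E VH EH" using good unfolding good_minor_def by blast
  have tv: "\<forall>x \<in> S1 \<union> T1 \<union> S2 \<union> T2. {x} \<in> VH" using good unfolding good_minor_def by blast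
  obtain p i where p: "p \<in> R" "Suc i < length p" "p!i = a" "p!Suc i = b" using ab by (rule parcsE)
  obtain q j where q: "q \<in> B" "Suc j < length q" "q!j = c" "q!Suc j = d" using cd by (rule parcsE)
  have onp: "a \<in> set p" "b \<in> set p" using p by (metis Suc_lessD nth_mem)+
  have onq0: "c \<in> set q" "d \<in> set q" using q by (metis Suc_lessD nth_mem)+
  have onq: "a \<in> set q" "b \<in> set q" using onq0 eq by (metis doubleton_eq_iff)+
  have nterm: "v \<noteq> {x}" if "v \<in> {a,b}" "x \<in> S1 \<union> T1 \<union> S2 \<union> T2" for v x
  proof
    assume vx: "v = {x}"
    have vp: "{x} \<in> set p" "{x} \<in> set q" using that(1) onp onq vx by auto
    show False
    proof (cases "x \<in> S1 \<union> T1")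
      case True
      then have "{x} \<notin> (\<lambda>x. {x}) ` S2" "{x} \<notin> (\<lambda>x. {x}) ` T2" using disj by auto
      then show False using term_not_on_path[OF M Bb q(1) vp(2)] deg tv True by blast
    next
      case False
      then have "x \<in> S2 \<union> T2" using that(2) by blast
      then have "{x} \<notin> (\<lambda>x. {x}) ` S1" "{x} \<notin> (\<lambda>x. {x}) ` T1" using disj by auto
      then show False using term_not_on_path[OF M Rr p(1) vp(1)] deg tv \<open>x \<in> S2 \<union> T2\<close> by blast
    qed
  qed
  have na: "a \<notin> (\<lambda>x. {x}) ` S" "b \<notin> (\<lambda>x. {x}) ` S" if "S \<subseteq> S1 \<union> T1 \<union> S2 \<union> T2" for S
    using nterm that by blast+
  have eab: "{a,b} \<in> EH" using parcs_edge[OF Rr ab] by simp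
  have "good_minor V E S1 T1 S2 T2 k (contract_vertices VH a b) (contract_edges EH a b)"
    unfolding good_minor_def
  proof (intro conjI)
    show "minor_model V E (contract_vertices VH a b) (contract_edges EH a b)"
      by (rule contract_model[OF M eab])
    show "\<forall>x\<in>S1 \<union> T1 \<union> S2 \<union> T2. {x} \<in> contract_vertices VH a b"
    proof
      fix x assume x: "x \<in> S1 \<union> T1 \<union> S2 \<union> T2"
      have "contract_map a b {x} = {x}" using nterm[OF _ x, of a] nterm[OF _ x, of b]
        unfolding contract_map_def by auto
      then show "{x} \<in> contract_vertices VH a b" using tv x unfolding contract_vertices_def by (metis image_eqI)
    qed
    show "routable (contract_vertices VH a b) (contract_edges EH a b) ((\<lambda>x. {x}) ` S1) ((\<lambda>x. {x}) ` T1) k"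
    proof -
      have h: "{p!i, p!Suc i} = {a,b}" "a \<notin> (\<lambda>x. {x}) ` S1" "b \<notin> (\<lambda>x. {x}) ` S1"
        "a \<notin> (\<lambda>x. {x}) ` T1" "b \<notin> (\<lambda>x. {x}) ` T1" using p na[of S1] na[of T1] by auto
      show ?thesis unfolding routable_def by (rule exI, rule contract_routing[OF M eab Rr p(1) split2[OF p(2)] h])
    qed
    have "{c,d} = {a,b}" using eq by simp
    then show "routable (contract_vertices VH a b) (contract_edges EH a b) ((\<lambda>x. {x}) ` S2) ((\<lambda>x. {x}) ` T2) k"
    proof -
      have h: "{q!j, q!Suc j} = {a,b}" "a \<notin> (\<lambda>x. {x}) ` S2" "b \<notin> (\<lambda>x. {x}) ` S2"
        "a \<notin> (\<lambda>x. {x}) ` T2" "b \<notin> (\<lambda>x. {x}) ` T2" using q \<open>{c,d} = {a,b}\<close> na[of S2] na[of T2] by auto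
      show ?thesis unfolding routable_def by (rule exI, rule contract_routing[OF M eab Bb q(1) split2[OF q(2)] h])
    qed
  qed
  moreover have "\<not> good_minor V E S1 T1 S2 T2 k (contract_vertices VH a b) (contract_edges EH a b)"
    using H eab unfolding minimal_minor_def by blast
  ultimately show False by simp
qed


lemma seg_alt:
  assumes c12: "c1 \<noteq> c2"
  shows "(\<forall>j<length segs. if even j then segs!j \<noteq> [] \<and> (\<forall>a\<in>set (segs!j). arc_col a = c2)
                   else (\<exists>a. segs!j = [a] \<and> arc_col a = c1)) \<Longrightarrow> even (length segs) \<Longrightarrow> segs \<noteq> [] \<Longrightarrow>
    successively (\<lambda>x y. arc_col x = c1 \<longrightarrow> arc_col y \<noteq> c1) (concat segs) \<and> arc_col (hd (concat segs)) = c2"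
proof (induction segs rule: induct_list012)
  case 1 then show ?case by simp
next
  case (2 x) then show ?case by simp
next
  case (3 s0 s1 rest)
  have h0: "s0 \<noteq> []" "\<forall>a\<in>set s0. arc_col a = c2" using "3.prems"(1)[rule_format, of 0] by auto
  obtain a where a: "s1 = [a]" "arc_col a = c1" using "3.prems"(1)[rule_format, of 1] by auto
  have rest: "\<forall>j<length rest. if even j then rest!j \<noteq> [] \<and> (\<forall>a\<in>set (rest!j). arc_col a = c2)
                   else (\<exists>a. rest!j = [a] \<and> arc_col a = c1)"
  proof (intro allI impI)
    fix j assume "j < length rest"
    then show "if even j then rest!j \<noteq> [] \<and> (\<forall>a\<in>set (rest!j). arc_col a = c2)
                   else (\<exists>a. rest!j = [a] \<and> arc_col a = c1)"
    proof -
      have "Suc (Suc j) < length (s0#s1#rest)" using \<open>j < length rest\<close> by simp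
      from "3.prems"(1)[rule_format, OF this] show ?thesis by (simp only: nth_Cons_Suc even_Suc_Suc_iff)
    qed
  qed
  have ev: "even (length rest)" using "3.prems"(2) by simp
  have s0s: "successively (\<lambda>x y. arc_col x = c1 \<longrightarrow> arc_col y \<noteq> c1) s0"
    by (rule successively_mono[of "\<lambda>x y. True"]) (auto simp: successively_conv_nth h0(2) c12[symmetric] c12 dest!: bspec[OF h0(2)] )
  have lasts0: "arc_col (last s0) = c2" using h0 by simp
  have hds0: "arc_col (hd s0) = c2" using h0 by simp
  show ?case
  proof (cases "rest = []")
    case True
    then show ?thesis using s0s lasts0 hds0 a h0(1) c12
      by (auto simp: successively_append_iff)
  next
    case False
    have IH: "successively (\<lambda>x y. arc_col x = c1 \<longrightarrow> arc_col y \<noteq> c1) (concat rest) \<and> arc_col (hd (concat rest)) = c2"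
      using "3.IH"(1)[OF rest ev False] .
    have cne: "concat rest \<noteq> []"
    proof -
      obtain r0 rs where "rest = r0 # rs" using False by (cases rest) auto
      moreover have "r0 \<noteq> []" using rest[rule_format, of 0] False \<open>rest = r0 # rs\<close> by auto
      ultimately show ?thesis by simp
    qed
    have "successively (\<lambda>x y. arc_col x = c1 \<longrightarrow> arc_col y \<noteq> c1) (a # concat rest)"
      using IH cne c12 by (simp add: successively_Cons)
    then show ?thesis using s0s lasts0 hds0 a h0(1) c12 IH cne
      by (auto simp: successively_append_iff)
  qed
qed


lemma routing_sub:
  assumes R: "routing V E S T k P" and sub: "\<And>p i. p \<in> P \<Longrightarrow> Suc i < length p \<Longrightarrow> {p!i, p!Suc i} \<in> E'"
  shows "routing V E' S T k P"
  using R sub unfolding routing_def is_path_def by blast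

lemma reroute:
  fixes P Q :: "'w list set" and C :: "('w \<times> 'w \<times> colour) list"
  assumes RP: "routing VH EH S T k P" and RQ: "routing VH EH S' T' k Q" and ST: "S \<inter> T = {}"
    and noshare: "\<And>a b c d. (a,b) \<in> parcs P \<Longrightarrow> (c,d) \<in> parcs Q \<Longrightarrow> {a,b} = {c,d} \<Longrightarrow> False"
    and cPQ: "cP \<noteq> cQ"
    and cyc: "alt_cycle cQ cP (path_arcs cP P \<union> path_arcs cQ Q) C"
  shows "\<exists>e0\<in>EH. routable VH (EH - {e0}) S T k \<and> routable VH (EH - {e0}) S' T' k"
proof -
  define n where "n = length C"
  define t where "t i = arc_tail (C!i)" for i
  define h where "h i = arc_head (C!i)" for i
  define col where "col i = arc_col (C!i)" for i
  have sc: "simple_dcycle (path_arcs cP P \<union> path_arcs cQ Q) C" using cyc unfolding alt_cycle_def by blast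
  have Cne: "C \<noteq> []" and Csub: "set C \<subseteq> path_arcs cP P \<union> path_arcs cQ Q"
    and dt: "distinct (map arc_tail C)"
    and lnk: "\<forall>i<length C. arc_head (C!i) = arc_tail (C ! ((Suc i) mod length C))"
    using sc unfolding simple_dcycle_def by auto
  have npos: "n > 0" using Cne n_def by simp
  obtain segs r where sg: "r > 0" "length segs = 2 * r" "C = concat segs"
      "\<forall>j<2 * r. if even j then segs!j \<noteq> [] \<and> (\<forall>a\<in>set (segs!j). arc_col a = cP)
                   else (\<exists>a. segs!j = [a] \<and> arc_col a = cQ)"
    using cyc unfolding alt_cycle_def by blast
  have alt: "successively (\<lambda>x y. arc_col x = cQ \<longrightarrow> arc_col y \<noteq> cQ) C \<and> arc_col (hd C) = cP"
  proof -
    have ne: "segs \<noteq> []" using sg(1,2) by auto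
    have ev: "even (length segs)" using sg(2) by simp
    have cond: "\<forall>j<length segs. if even j then segs!j \<noteq> [] \<and> (\<forall>a\<in>set (segs!j). arc_col a = cP)
                   else (\<exists>a. segs!j = [a] \<and> arc_col a = cQ)" using sg(2,4) by simp
    show ?thesis using seg_alt[OF cPQ[symmetric] cond ev ne] sg(3) by simp
  qed
  have col0: "col 0 = cP" using alt Cne unfolding col_def by (simp add: hd_conv_nth)
  have colv: "col i = cP \<or> col i = cQ" if "i < n" for i
  proof -
    have "C!i \<in> set C" using that n_def by simp
    then have "C!i \<in> path_arcs cP P \<union> path_arcs cQ Q" using Csub by blast
    then show ?thesis unfolding col_def by (auto simp: path_arcs_iff)
  qed
  have inP: "(t i, h i) \<in> parcs P" if "i < n" "col i = cP" for i
  proof -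
    have "C!i \<in> set C" using that n_def by simp
    then have "C!i \<in> path_arcs cP P \<union> path_arcs cQ Q" using Csub by blast
    then show ?thesis using that cPQ unfolding col_def t_def h_def by (auto simp: path_arcs_iff)
  qed
  have inQ: "(t i, h i) \<in> parcs Q" if "i < n" "col i = cQ" for i
  proof -
    have "C!i \<in> set C" using that n_def by simp
    then have "C!i \<in> path_arcs cP P \<union> path_arcs cQ Q" using Csub by blast
    then show ?thesis using that cPQ unfolding col_def t_def h_def by (auto simp: path_arcs_iff)
  qed
  have tinj: "i = j" if "i < n" "j < n" "t i = t j" for i j
    using dt that unfolding t_def n_def by (simp add: distinct_conv_nth) blast
  have hnext: "h i = t (Suc i mod n)" if "i < n" for i
    using lnk that unfolding h_def t_def n_def by simp
  have hinj: "i = j" if "i < n" "j < n" "h i = h j" for i j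
  proof -
    have "Suc i mod n = Suc j mod n" using tinj[of "Suc i mod n" "Suc j mod n"] hnext that npos by simp
    moreover have "Suc i mod n = (if Suc i = n then 0 else Suc i)" using that(1) by (cases "Suc i = n") auto
    moreover have "Suc j mod n = (if Suc j = n then 0 else Suc j)" using that(2) by (cases "Suc j = n") auto
    ultimately show ?thesis by (auto split: if_splits)
  qed
  define pv where "pv i = (if i = 0 then n - 1 else i - 1)" for i
  have pv: "pv i < n" "h (pv i) = t i" if "i < n" for i
  proof -
    show "pv i < n" using that npos unfolding pv_def by auto
    show "h (pv i) = t i"
    proof (cases "i = 0")
      case True
      then have "Suc (pv i) mod n = i" using npos unfolding pv_def by simp
      then show ?thesis using hnext[of "pv i"] \<open>pv i < n\<close> by simp
    next
      case False
      then have "Suc (pv i) mod n = i" using that unfolding pv_def by simp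
      then show ?thesis using hnext[of "pv i"] \<open>pv i < n\<close> by simp
    qed
  qed
  have pvcol: "col (pv i) = cP" if "i < n" "col i = cQ" for i
  proof -
    have "i \<noteq> 0" using col0 that(2) cPQ by metis
    then have "pv i = i - 1" "Suc (i - 1) < length C" using that n_def unfolding pv_def by auto
    then show ?thesis using successively_nth[OF alt[THEN conjunct1] \<open>Suc (i - 1) < length C\<close>]
        colv[of "i - 1"] that \<open>i \<noteq> 0\<close> unfolding col_def by auto
  qed
  define nt where "nt i = Suc i mod n" for i
  have nt: "nt i < n" "t (nt i) = h i" if "i < n" for i
    using hnext that npos unfolding nt_def by auto
  have ntcol: "col (nt i) = cP" if "i < n" "col i = cQ" for i
  proof (cases "Suc i < n")
    case True
    then have "nt i = Suc i" unfolding nt_def by simp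
    then show ?thesis using successively_nth[OF alt[THEN conjunct1], of i] True colv[of "Suc i"] that
      unfolding col_def n_def by auto
  next
    case False
    then have "Suc i = n" using that by simp
    then have "nt i = 0" unfolding nt_def by simp
    then show ?thesis using col0 by simp
  qed
  define M where "M = {(t i, h i) | i. i < n \<and> col i = cP}"
  define N where "N = {(h i, t i) | i. i < n \<and> col i = cQ}"
  define A' where "A' = (parcs P - M) \<union> N"
  have Mmem: "(x,y) \<in> M \<longleftrightarrow> (\<exists>i<n. col i = cP \<and> x = t i \<and> y = h i)" for x y unfolding M_def by blast
  have Nmem: "(x,y) \<in> N \<longleftrightarrow> (\<exists>i<n. col i = cQ \<and> x = h i \<and> y = t i)" for x y unfolding N_def by blast
  have MP: "M \<subseteq> parcs P" unfolding M_def using inP by blast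
  have finA: "finite A'"
  proof -
    have "N \<subseteq> (\<lambda>i. (h i, t i)) ` {..<n}" unfolding N_def by blast
    then have "finite N" by (meson finite_imageI finite_lessThan finite_subset)
    then show ?thesis unfolding A'_def using parcs_finite[OF RP] by blast
  qed
  have fnA: "y = z" if "(x,y) \<in> A'" "(x,z) \<in> A'" for x y z
  proof -
    have c1: False if a: "(x,y) \<in> N" "(x,z) \<in> parcs P - M" for x y z
    proof -
      obtain i where i: "i < n" "col i = cQ" "x = h i" "y = t i" using a(1) Nmem by blast
      have "(x, h (nt i)) \<in> M" using Mmem nt[OF i(1)] ntcol[OF i(1,2)] i by metis
      then have "(x, h (nt i)) \<in> parcs P" using MP by blast
      then have "z = h (nt i)" using parcs_fun[OF RP] a(2) by blast
      then show False using a(2) \<open>(x, h (nt i)) \<in> M\<close> by blast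
    qed
    show ?thesis
    proof (cases "(x,y) \<in> N")
      case yN: True
      show ?thesis
      proof (cases "(x,z) \<in> N")
        case True
        obtain i where i: "i < n" "col i = cQ" "x = h i" "y = t i" using yN Nmem by blast
        obtain j where j: "j < n" "col j = cQ" "x = h j" "z = t j" using True Nmem by blast
        have "i = j" using hinj i j by simp
        then show ?thesis using i j by simp
      next
        case False then show ?thesis using c1[OF yN] that(2) unfolding A'_def by blast
      qed
    next
      case yN: False
      show ?thesis
      proof (cases "(x,z) \<in> N")
        case True then show ?thesis using c1[OF True] that(1) yN unfolding A'_def by blast
      next
        case False then show ?thesis using that yN parcs_fun[OF RP] unfolding A'_def by blast
      qed
    qed
  qed
  have injA: "x = y" if "(x,z) \<in> A'" "(y,z) \<in> A'" for x y z
  proof -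
    have c1: False if a: "(x,z) \<in> N" "(y,z) \<in> parcs P - M" for x y z
    proof -
      obtain i where i: "i < n" "col i = cQ" "x = h i" "z = t i" using a(1) Nmem by blast
      have "(t (pv i), z) \<in> M" using Mmem pv[OF i(1)] pvcol[OF i(1,2)] i by metis
      then have "(t (pv i), z) \<in> parcs P" using MP by blast
      then have "y = t (pv i)" using parcs_inj[OF RP] a(2) by blast
      then show False using a(2) \<open>(t (pv i), z) \<in> M\<close> by blast
    qed
    show ?thesis
    proof (cases "(x,z) \<in> N")
      case yN: True
      show ?thesis
      proof (cases "(y,z) \<in> N")
        case True
        obtain i where i: "i < n" "col i = cQ" "x = h i" "z = t i" using yN Nmem by blast
        obtain j where j: "j < n" "col j = cQ" "y = h j" "z = t j" using True Nmem by blast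
        have "i = j" using tinj i j by simp
        then show ?thesis using i j by simp
      next
        case False then show ?thesis using c1[OF yN] that(2) unfolding A'_def by blast
      qed
    next
      case yN: False
      show ?thesis
      proof (cases "(y,z) \<in> N")
        case True then show ?thesis using c1[OF True] that(1) yN unfolding A'_def by blast
      next
        case False then show ?thesis using that yN parcs_inj[OF RP] unfolding A'_def by blast
      qed
    qed
  qed
  define e0 where "e0 = {t 0, h 0}"
  have M0: "(t 0, h 0) \<in> M" using Mmem col0 npos by blast
  have P0: "(t 0, h 0) \<in> parcs P" using M0 MP by blast
  have e0E: "e0 \<in> EH" using parcs_edge[OF RP P0] unfolding e0_def by simp
  have edges: "{x,y} \<in> EH - {e0} \<and> x \<in> VH \<and> y \<in> VH" if "(x,y) \<in> A'" for x y
  proof (cases "(x,y) \<in> N")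
    case True
    obtain i where i: "i < n" "col i = cQ" "x = h i" "y = t i" using True Nmem by blast
    have q: "(t i, h i) \<in> parcs Q" using inQ i by simp
    have "{y,x} \<in> EH \<and> y \<in> VH \<and> x \<in> VH" using parcs_edge[OF RQ q] i by simp
    moreover have "{x,y} \<noteq> e0"
    proof
      assume "{x,y} = e0"
      then have "{t 0, h 0} = {t i, h i}" using i unfolding e0_def by (simp add: insert_commute)
      then show False using noshare[OF P0 q] by simp
    qed
    ultimately show ?thesis by (simp add: insert_commute)
  next
    case False
    then have a: "(x,y) \<in> parcs P" "(x,y) \<notin> M" using that unfolding A'_def by auto
    have "{x,y} \<noteq> e0"
    proof
      assume "{x,y} = e0"
      then have "(x = t 0 \<and> y = h 0) \<or> (x = h 0 \<and> y = t 0)" unfolding e0_def by (metis doubleton_eq_iff)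
      then show False
      proof
        assume "x = t 0 \<and> y = h 0" then show False using a(2) M0 by simp
      next
        assume "x = h 0 \<and> y = t 0" then show False using parcs_2cyc[OF RP P0] a(1) by simp
      qed
    qed
    then show ?thesis using parcs_edge[OF RP a(1)] by simp
  qed
  have Zsrc: "(\<nexists>w. (w,z) \<in> A') \<and> hasout A' z" if z: "z \<in> hd ` P" for z
  proof -
    obtain p where p: "p \<in> P" "z = hd p" using z by blast
    have noinP: "\<nexists>w. (w, z) \<in> parcs P" using hd_no_in[OF RP p(1)] p by simp
    have noin: "\<nexists>w. (w,z) \<in> A'"
    proof
      assume "\<exists>w. (w,z) \<in> A'"
      then obtain w where w: "(w,z) \<in> A'" by blast
      show False
      proof (cases "(w,z) \<in> N")
        case True
        obtain i where i: "i < n" "col i = cQ" "w = h i" "z = t i" using True Nmem by blast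
        have "(t (pv i), z) \<in> parcs P" using inP[OF pv(1)[OF i(1)] pvcol[OF i(1,2)]] pv(2)[OF i(1)] i by simp
        then show False using noinP by blast
      next
        case False then show False using w noinP unfolding A'_def by blast
      qed
    qed
    have ho: "(z, p!1) \<in> parcs P" using hd_out[OF RP p(1) ST] p by simp
    have "hasout A' z"
    proof (cases "(z, p!1) \<in> M")
      case False then show ?thesis using ho unfolding hasout_def A'_def by blast
    next
      case True
      then obtain i where i: "i < n" "col i = cP" "z = t i" using Mmem by blast
      have hv: "h (pv i) = z" using pv[OF i(1)] i by simp
      have "col (pv i) = cQ"
      proof (rule ccontr)
        assume "col (pv i) \<noteq> cQ"
        then have "col (pv i) = cP" using colv pv(1)[OF i(1)] by blast
        then have "(t (pv i), z) \<in> parcs P" using inP[OF pv(1)[OF i(1)]] hv by simp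
        then show False using noinP by blast
      qed
      then have "(z, t (pv i)) \<in> N" using Nmem pv(1)[OF i(1)] hv by blast
      then show ?thesis unfolding hasout_def A'_def by blast
    qed
    then show ?thesis using noin by blast
  qed
  have sink: "x \<in> T" if w: "(w,x) \<in> A'" and no: "\<not> hasout A' x" for w x
  proof -
    have noout: "(x,y) \<notin> A'" for y using no unfolding hasout_def by blast
    show ?thesis
    proof (cases "(w,x) \<in> N")
      case True
      obtain i where i: "i < n" "col i = cQ" "w = h i" "x = t i" using True Nmem by blast
      have px: "(t (pv i), x) \<in> parcs P" using inP[OF pv(1)[OF i(1)] pvcol[OF i(1,2)]] pv(2)[OF i(1)] i by simp
      obtain p where p: "p \<in> P" "x \<in> set p" using parcs_on_path[OF px] by blast
      have "\<nexists>y. (x,y) \<in> parcs P"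
      proof
        assume "\<exists>y. (x,y) \<in> parcs P"
        then obtain y where y: "(x,y) \<in> parcs P" by blast
        have "(x,y) \<notin> M"
        proof
          assume "(x,y) \<in> M"
          then obtain l where l: "l < n" "col l = cP" "x = t l" using Mmem by blast
          have "l = i" using tinj l i by simp
          then show False using l i cPQ by simp
        qed
        then show False using y noout unfolding A'_def by blast
      qed
      then show ?thesis using no_out_T[OF RP p] by blast
    next
      case False
      then have a: "(w,x) \<in> parcs P" "(w,x) \<notin> M" using w unfolding A'_def by auto
      obtain p where p: "p \<in> P" "x \<in> set p" using parcs_on_path[OF a(1)] by blast
      have "\<nexists>y. (x,y) \<in> parcs P"
      proof
        assume "\<exists>y. (x,y) \<in> parcs P"
        then obtain y where y: "(x,y) \<in> parcs P" by blast
        have "(x,y) \<in> M" using y noout unfolding A'_def by blast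
        then obtain i where i: "i < n" "col i = cP" "x = t i" using Mmem by blast
        have hv: "h (pv i) = x" using pv[OF i(1)] i by simp
        show False
        proof (cases "col (pv i) = cQ")
          case True
          then have "(x, t (pv i)) \<in> N" using Nmem pv(1)[OF i(1)] hv by blast
          then show False using noout unfolding A'_def by blast
        next
          case False
          then have cp: "col (pv i) = cP" using colv pv(1)[OF i(1)] by blast
          then have m: "(t (pv i), x) \<in> M" using Mmem pv(1)[OF i(1)] hv by blast
          then have "(t (pv i), x) \<in> parcs P" using MP by blast
          then have "w = t (pv i)" using parcs_inj[OF RP a(1)] by simp
          then show False using a(2) m by simp
        qed
      qed
      then show ?thesis using no_out_T[OF RP p] by blast
    qed
  qed
  have finZ: "finite (hd ` P)" using RP unfolding routing_def by simp
  have ZS: "hd ` P \<subseteq> S" using routing_path(2)[OF RP] by blast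
  have r1: "routable VH (EH - {e0}) S T (card (hd ` P))"
    by (rule paths_from_arcs[OF finA fnA injA edges finZ ZS Zsrc sink])
  then have r1': "routable VH (EH - {e0}) S T k" using hd_inj(2)[OF RP] by simp
  have "routing VH (EH - {e0}) S' T' k Q"
  proof (rule routing_sub[OF RQ])
    fix q i assume q: "q \<in> Q" "Suc i < length q"
    have qa: "(q!i, q!Suc i) \<in> parcs Q" using parcsI[OF q] .
    have "{q!i, q!Suc i} \<in> EH" using parcs_edge[OF RQ qa] by simp
    moreover have "{q!i, q!Suc i} \<noteq> e0"
    proof
      assume "{q!i, q!Suc i} = e0"
      then show False using noshare[OF P0 qa] unfolding e0_def by simp
    qed
    ultimately show "{q!i, q!Suc i} \<in> EH - {e0}" by simp
  qed
  then have r2: "routable VH (EH - {e0}) S' T' k" unfolding routable_def by blast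
  show ?thesis using r1' r2 e0E by blast
qed


lemma model_sub:
  assumes M: "minor_model V E VH EH" and sub: "EH' \<subseteq> EH"
  shows "minor_model V E VH EH'"
proof -
  have a: "\<forall>X\<in>VH. X \<noteq> {} \<and> X \<subseteq> V \<and> connected_set E X"
    using M unfolding minor_model_def by (elim conjE)
  have b: "\<forall>X\<in>VH. \<forall>Y\<in>VH. X \<noteq> Y \<longrightarrow> X \<inter> Y = {}"
    using M unfolding minor_model_def by (elim conjE)
  have c: "\<forall>e\<in>EH'. \<exists>X Y. e = {X, Y} \<and> X \<in> VH \<and> Y \<in> VH \<and> X \<noteq> Y \<and> (\<exists>x\<in>X. \<exists>y\<in>Y. {x, y} \<in> E)"
  proof
    fix e assume "e \<in> EH'"
    then have "e \<in> EH" using sub by blast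
    then show "\<exists>X Y. e = {X, Y} \<and> X \<in> VH \<and> Y \<in> VH \<and> X \<noteq> Y \<and> (\<exists>x\<in>X. \<exists>y\<in>Y. {x, y} \<in> E)"
      by (rule model_edges[OF M])
  qed
  show ?thesis unfolding minor_model_def using a b c by (intro conjI)
qed

lemma delete_contra:
  assumes H: "minimal_minor V E S1 T1 S2 T2 k VH EH" and e0: "e0 \<in> EH"
    and r1: "routable VH (EH - {e0}) ((\<lambda>x. {x}) ` S1) ((\<lambda>x. {x}) ` T1) k"
    and r2: "routable VH (EH - {e0}) ((\<lambda>x. {x}) ` S2) ((\<lambda>x. {x}) ` T2) k"
  shows False
proof -
  have good: "good_minor V E S1 T1 S2 T2 k VH EH" using H unfolding minimal_minor_def by blast
  have M: "minor_model V E VH EH" using good unfolding good_minor_def by blast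
  have tv: "\<forall>x \<in> S1 \<union> T1 \<union> S2 \<union> T2. {x} \<in> VH" using good unfolding good_minor_def by blast
  obtain X Y where XY: "e0 = {X,Y}" using model_edges[OF M e0] by blast
  have "good_minor V E S1 T1 S2 T2 k VH (delete_edge EH {X,Y})"
    unfolding good_minor_def delete_edge_def
    using model_sub[OF M, of "EH - {e0}"] tv r1 r2 XY by auto
  moreover have "\<not> good_minor V E S1 T1 S2 T2 k VH (delete_edge EH {X,Y})"
    using H e0 XY unfolding minimal_minor_def by blast
  ultimately show False by simp
qed

theorem lemma2p3:
  fixes V :: "'v set" and E :: "'v set set"
    and S1 T1 S2 T2 :: "'v set" and k :: nat
    and VH :: "'v set set" and EH :: "'v set set set"
    and R B :: "'v set list set"
  assumes G: "graph V E"
    and sub: "S1 \<subseteq> V" "T1 \<subseteq> V" "S2 \<subseteq> V" "T2 \<subseteq> V"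
    and disj: "S1 \<inter> T1 = {}" "S1 \<inter> S2 = {}" "S1 \<inter> T2 = {}"
              "T1 \<inter> S2 = {}" "T1 \<inter> T2 = {}" "S2 \<inter> T2 = {}"
    and card: "card S1 = k" "card T1 = k" "card S2 = k" "card T2 = k"
    and deg: "\<forall>x \<in> S1 \<union> T1 \<union> S2 \<union> T2. degree E x = 1"
    and rout: "routable V E S1 T1 k" "routable V E S2 T2 k"
    and H: "minimal_minor V E S1 T1 S2 T2 k VH EH"
    and Rr: "routing VH EH ((\<lambda>x. {x}) ` S1) ((\<lambda>x. {x}) ` T1) k R"
    and Bb: "routing VH EH ((\<lambda>x. {x}) ` S2) ((\<lambda>x. {x}) ` T2) k B"
  shows "\<not> (\<exists>C. red_cycle (tilde_arcs R B) C) \<and> \<not> (\<exists>C. blue_cycle (tilde_arcs R B) C)"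
proof -
  have nsRB: False if "(a,b) \<in> parcs R" "(c,d) \<in> parcs B" "{a,b} = {c,d}" for a b c d
    using no_shared[OF H disj deg Rr Bb that] .
  have nsBR: False if "(a,b) \<in> parcs B" "(c,d) \<in> parcs R" "{a,b} = {c,d}" for a b c d
    using no_shared[OF H disj deg Rr Bb that(2,1) that(3)[symmetric]] .
  have d1: "(\<lambda>x. {x}) ` S1 \<inter> (\<lambda>x. {x}) ` T1 = {}" using disj(1) by auto
  have d2: "(\<lambda>x. {x}) ` S2 \<inter> (\<lambda>x. {x}) ` T2 = {}" using disj(6) by auto
  have red: False if "red_cycle (tilde_arcs R B) C" for C
  proof -
    have cyc: "alt_cycle Blue Red (path_arcs Red R \<union> path_arcs Blue B) C"
      using that unfolding red_cycle_def tilde_arcs_def .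
    obtain e0 where "e0 \<in> EH" "routable VH (EH - {e0}) ((\<lambda>x. {x}) ` S1) ((\<lambda>x. {x}) ` T1) k"
      "routable VH (EH - {e0}) ((\<lambda>x. {x}) ` S2) ((\<lambda>x. {x}) ` T2) k"
    proof -
      have "\<exists>e0\<in>EH. routable VH (EH - {e0}) ((\<lambda>x. {x}) ` S1) ((\<lambda>x. {x}) ` T1) k \<and>
                  routable VH (EH - {e0}) ((\<lambda>x. {x}) ` S2) ((\<lambda>x. {x}) ` T2) k"
        apply (rule reroute[OF Rr Bb d1 _ _ cyc])
         apply (rule nsRB, assumption+)
        apply simp
        done
      then show ?thesis using that by blast
    qed
    then show False using delete_contra[OF H] by blast
  qed
  have blue: False if "blue_cycle (tilde_arcs R B) C" for C
  proof -
    have cyc: "alt_cycle Red Blue (path_arcs Blue B \<union> path_arcs Red R) C"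
      using that unfolding blue_cycle_def tilde_arcs_def by (simp add: Un_commute)
    obtain e0 where "e0 \<in> EH" "routable VH (EH - {e0}) ((\<lambda>x. {x}) ` S2) ((\<lambda>x. {x}) ` T2) k"
      "routable VH (EH - {e0}) ((\<lambda>x. {x}) ` S1) ((\<lambda>x. {x}) ` T1) k"
    proof -
      have "\<exists>e0\<in>EH. routable VH (EH - {e0}) ((\<lambda>x. {x}) ` S2) ((\<lambda>x. {x}) ` T2) k \<and>
                  routable VH (EH - {e0}) ((\<lambda>x. {x}) ` S1) ((\<lambda>x. {x}) ` T1) k"
        apply (rule reroute[OF Bb Rr d2 _ _ cyc])
         apply (rule nsBR, assumption+)
        apply simp
        done
      then show ?thesis using that by blast
    qed
    then show False using delete_contra[OF H] by blast
  qed
  show ?thesis using red blue by blast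
qed

end
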